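(* Let $Z \subset (\mathbb{C}^{\times})^n$ be a very affine linear space. Then the angle map \[ \mathrm{ang}\colon Z \longrightarrow (S^1)^n,\qquad x=(x_1,\dots,x_n)\longmapsto \left(\frac{x_1}{|x_1|},\dots,\frac{x_n}{|x_n|}\right) \] is a homotopy equivalence from $Z$ onto its image $\Theta := \mathrm{ang}(Z)$ (with the subspace topology of $(S^1)^n$).
   Context: $S^1=\{z\in\mathbb{C}:|z|=1\}$; $(\mathbb{C}^\times)^n$ and $(S^1)^n$ carry the Euclidean topology. A very affine linear space is a nonempty closed subvariety $Z\subset(\mathbb{C}^\times)^n$ whose ideal in $\mathbb{C}[x_1^{\pm1},\dots,x_n^{\pm1}]$ is generated by affine linear polynomials $c_0+c_1x_1+\dots+c_nx_n$ with $c_i\in\mathbb{C}$. Equivalently, $Z$ is the image of the complement $\mathbb{P}^d\setminus\bigcup_{j=0}^n V(H_j)$ of an essential projective hyperplane arrangement under $P\mapsto [H_0(P):\dots:H_n(P)]$, where the torus of $\mathbb{P}^n$ is identified with $(\mathbb{C}^\times)^n$ (essential meaning this map is injective). *)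

theory Defs
  imports "HOL-Analysis.Analysis"
begin

definition torus :: "(complex ^ 'n) set" where
  "torus = {x. \<forall>j. x $ j \<noteq> 0}"

definition very_affine_linear_space :: "(complex ^ 'n) set \<Rightarrow> bool" where
  "very_affine_linear_space Z \<longleftrightarrow> Z \<noteq> {} \<and>
     (\<exists>E :: (complex \<times> (complex ^ 'n)) set.
        Z = {x \<in> torus. \<forall>(c, a) \<in> E. c + (\<Sum>j\<in>UNIV. a $ j * x $ j) = 0})"

definition ang :: "complex ^ 'n \<Rightarrow> complex ^ 'n" where
  "ang x = (\<chi> j. x $ j / complex_of_real (cmod (x $ j)))"

definition homotopy_equivalence_map :: "'a topology \<Rightarrow> 'b topology \<Rightarrow> ('a \<Rightarrow> 'b) \<Rightarrow> bool" where
  "homotopy_equivalence_map X Y f \<longleftrightarrow> continuous_map X Y f \<and>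
     (\<exists>g. continuous_map Y X g \<and>
          homotopic_with (\<lambda>h. True) X X (g \<circ> f) id \<and>
          homotopic_with (\<lambda>h. True) Y Y (f \<circ> g) id)"

end

theory Submission
  imports Defs
begin

lemma convex_selection:
  fixes D :: "'a::{metric_space,second_countable_topology} set"
    and G :: "'a \<Rightarrow> 'b::real_normed_vector set"
  assumes cvx: "\<And>d. d \<in> D \<Longrightarrow> convex (G d)"
    and loc: "\<And>d. d \<in> D \<Longrightarrow> \<exists>y N. open N \<and> d \<in> N \<and> (\<forall>d'\<in>D \<inter> N. y \<in> G d')"
  obtains g where "continuous_on D g" "\<And>d. d \<in> D \<Longrightarrow> g d \<in> G d"
proof -
  define \<B> where "\<B> = {N. open N \<and> (\<exists>y. \<forall>d'\<in>D \<inter> N. y \<in> G d')}"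
  have DB: "D \<subseteq> \<Union>\<B>"
    using loc unfolding \<B>_def by blast
  obtain \<C> where DC: "D \<subseteq> \<Union>\<C>"
       and nbrhd: "\<And>U. U \<in> \<C> \<Longrightarrow> open U \<and> (\<exists>T. T \<in> \<B> \<and> U \<subseteq> T)"
       and fin: "\<And>x. x \<in> D \<Longrightarrow> \<exists>V. open V \<and> x \<in> V \<and> finite {U. U \<in> \<C> \<and> U \<inter> V \<noteq> {}}"
    by (rule paracompact [OF DB]) (auto simp: \<B>_def)
  have "\<forall>U\<in>\<C>. \<exists>y. \<forall>d'\<in>D \<inter> U. y \<in> G d'"
    using nbrhd unfolding \<B>_def by blast
  then obtain Y where Y0: "\<forall>U\<in>\<C>. \<forall>d'\<in>D \<inter> U. Y U \<in> G d'"
    by (metis (no_types))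
  then have Y: "\<And>U d'. U \<in> \<C> \<Longrightarrow> d' \<in> D \<Longrightarrow> d' \<in> U \<Longrightarrow> Y U \<in> G d'"
    by blast
  obtain H :: "['a set, 'a] \<Rightarrow> real"
    where Hcont: "\<And>Z. Z \<in> \<C> \<Longrightarrow> continuous_on D (H Z)"
      and Hge0: "\<And>Z x. \<lbrakk>Z \<in> \<C>; x \<in> D\<rbrakk> \<Longrightarrow> 0 \<le> H Z x"
      and Heq0: "\<And>x Z. \<lbrakk>Z \<in> \<C>; x \<in> D; x \<notin> Z\<rbrakk> \<Longrightarrow> H Z x = 0"
      and H1: "\<And>x. x \<in> D \<Longrightarrow> supp_sum (\<lambda>W. H W x) \<C> = 1"
      and Hfin: "\<And>x. x \<in> D \<Longrightarrow> \<exists>V. open V \<and> x \<in> V \<and> finite {U \<in> \<C>. \<exists>x\<in>V. H U x \<noteq> 0}"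
    apply (rule subordinate_partition_of_unity [OF DC _ fin])
    using nbrhd by auto
  define g where "g \<equiv> \<lambda>x. supp_sum (\<lambda>T. H T x *\<^sub>R Y T) \<C>"
  show ?thesis
  proof (rule that)
    show "continuous_on D g"
    proof (clarsimp simp: continuous_on_eq_continuous_within)
      fix a assume "a \<in> D"
      obtain N where N: "open N" "a \<in> N"
                 and finN: "finite {U \<in> \<C>. \<exists>a\<in>N. H U a \<noteq> 0}"
        using Hfin \<open>a \<in> D\<close> by auto
      have HcontU: "continuous (at a within D) (H T)" if "T \<in> \<C>" for T
        using Hcont [OF \<open>T \<in> \<C>\<close>] \<open>a \<in> D\<close>
        by (simp add: continuous_on_eq_continuous_within)
      show "continuous (at a within D) g"
      proof (rule continuous_transform_within_openin)
        show "continuous (at a within D)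
                (\<lambda>x. \<Sum>T\<in>{U \<in> \<C>. \<exists>x\<in>N. H U x \<noteq> 0}. H T x *\<^sub>R Y T)"
          by (force intro: continuous_intros HcontU)+
      next
        show "openin (top_of_set D) (D \<inter> N)"
          using N by blast
      next
        show "a \<in> D \<inter> N" using \<open>a \<in> D\<close> N by blast
      next
        show "\<And>x. x \<in> D \<inter> N \<Longrightarrow>
                     (\<Sum>T \<in> {U \<in> \<C>. \<exists>x\<in>N. H U x \<noteq> 0}. H T x *\<^sub>R Y T) = g x"
          by (auto simp: g_def supp_sum_def support_on_def
                   intro: sum.mono_neutral_right [OF finN])
      qed
    qed
    show "g d \<in> G d" if "d \<in> D" for d
      unfolding g_def
      apply (rule convex_supp_sum [OF cvx[OF that]])
      using that H1 Hge0 Heq0 Y by (auto) (metis)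
  qed
qed

lemma est:
  fixes x th :: complex
  assumes "cmod th = 1" "(1-t)*cmod x < Re (x * cnj th)" "0 \<le> t"
  shows "cmod (x / complex_of_real (cmod x) - th)^2 < 2*t"
proof -
  have x0: "x \<noteq> 0" using assms(2) by auto
  define r where "r = cmod x"
  have r: "r > 0" using x0 r_def by auto
  define u where "u = x / complex_of_real r"
  have u1: "cmod u = 1" using r by (simp add: u_def norm_divide r_def)
  have Reu: "Re (u * cnj th) = Re (x * cnj th) / r"
    by (simp add: u_def Re_divide_of_real)
  have "cmod (u - th)^2 = cmod u ^2 + cmod th ^2 - 2 * Re (u * cnj th)"
    unfolding cmod_power2 by (simp add: power2_eq_square algebra_simps)
  also have "\<dots> = 2 - 2 * (Re (x * cnj th) / r)" using u1 assms(1) Reu by simp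
  also have "\<dots> < 2 - 2 * (1 - t)"
  proof -
    have "(1-t) * r < Re (x * cnj th)" using assms(2) r_def by simp
    then have "1 - t < Re (x * cnj th) / r" using r by (simp add: field_simps)
    then show ?thesis by (smt (verit))
  qed
  finally show ?thesis by (simp add: u_def r_def)
qed

lemma sector_convex:
  fixes th :: complex
  assumes "t \<le> 1"
  shows "convex {x. (1-t)*cmod x < Re (x * cnj th)}"
  unfolding convex_def mem_Collect_eq
proof (intro ballI allI impI)
  fix x y :: complex and u v :: real
  assume x': "x \<in> {x. (1-t)*cmod x < Re (x * cnj th)}" and y': "y \<in> {x. (1-t)*cmod x < Re (x * cnj th)}"
    and u: "0 \<le> u" and v: "0 \<le> v" and uv: "u + v = 1"
  have x: "(1-t)*cmod x < Re (x * cnj th)" and y: "(1-t)*cmod y < Re (y * cnj th)"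
    using x' y' by auto
  have "(1-t) * cmod (u *\<^sub>R x + v *\<^sub>R y) \<le> (1-t) * (u * cmod x + v * cmod y)"
    using assms u v norm_triangle_ineq[of "u *\<^sub>R x" "v *\<^sub>R y"]
    by (intro mult_left_mono) auto
  also have "\<dots> = u * ((1-t)*cmod x) + v * ((1-t)*cmod y)" by (simp add: algebra_simps)
  also have "\<dots> < u * Re (x * cnj th) + v * Re (y * cnj th)"
  proof (cases "u = 0")
    case True then show ?thesis using uv y by simp
  next
    case False
    then have "u > 0" using u by simp
    then have "u * ((1-t)*cmod x) < u * Re (x * cnj th)" using x by simp
    moreover have "v * ((1-t)*cmod y) \<le> v * Re (y * cnj th)" using y v
      by (intro mult_left_mono) auto
    ultimately show ?thesis by linarith
  qed
  also have "\<dots> = Re ((u *\<^sub>R x + v *\<^sub>R y) * cnj th)"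
    by (simp add: scaleR_conv_of_real algebra_simps)
  finally show "(1-t) * cmod (u *\<^sub>R x + v *\<^sub>R y) < Re ((u *\<^sub>R x + v *\<^sub>R y) * cnj th)" .
qed

lemma vec_comp_convex:
  fixes S :: "'a::real_vector set"
  assumes "convex S"
  shows "convex {x::'a^'n. x $ j \<in> S}"
  using assms unfolding convex_def by auto

lemma affine_eq_convex:
  fixes a :: "complex^'n" and c :: complex
  shows "convex {x::complex^'n. c + (\<Sum>j\<in>UNIV. a $ j * x $ j) = 0}"
  unfolding convex_def mem_Collect_eq
proof (intro ballI allI impI)
  fix x y :: "complex^'n" and u v :: real
  assume x': "x \<in> {x. c + (\<Sum>j\<in>UNIV. a $ j * x $ j) = 0}"
    and y': "y \<in> {x. c + (\<Sum>j\<in>UNIV. a $ j * x $ j) = 0}"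
    and u: "0 \<le> u" and v: "0 \<le> v" and uv: "u + v = 1"
  have x: "(\<Sum>j\<in>UNIV. a $ j * x $ j) = - c" and y: "(\<Sum>j\<in>UNIV. a $ j * y $ j) = - c"
    using x' y' by (auto simp: add_eq_0_iff)
  have "(\<Sum>j\<in>UNIV. a $ j * (u *\<^sub>R x + v *\<^sub>R y) $ j)
      = of_real u * (\<Sum>j\<in>UNIV. a $ j * x $ j) + of_real v * (\<Sum>j\<in>UNIV. a $ j * y $ j)"
    unfolding vector_add_component vector_scaleR_component
    by (simp add: scaleR_conv_of_real sum_distrib_left sum.distrib algebra_simps)
  also have "\<dots> = - (of_real (u + v) * c)" using x y by (simp add: algebra_simps)
  also have "\<dots> = - c" using uv by simp
  finally show "c + (\<Sum>j\<in>UNIV. a $ j * (u *\<^sub>R x + v *\<^sub>R y) $ j) = 0" by simp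
qed

lemma norm_le_sum_vec:
  fixes v :: "complex^'n"
  shows "norm v \<le> (\<Sum>j\<in>UNIV. cmod (v $ j))"
  unfolding norm_vec_def by (rule L2_set_le_sum) auto

theorem theoremA:
  fixes Z :: "(complex ^ 'n) set"
  assumes "very_affine_linear_space Z"
  shows "homotopy_equivalence_map (subtopology euclidean Z) (subtopology euclidean (ang ` Z)) ang"
proof -
  from assms obtain E :: "(complex \<times> (complex ^ 'n)) set" where Zne: "Z \<noteq> {}"
    and Zdef: "Z = {x \<in> torus. \<forall>(c, a) \<in> E. c + (\<Sum>j\<in>UNIV. a $ j * x $ j) = 0}"
    unfolding very_affine_linear_space_def by blast
  define L where "L = {x::complex^'n. \<forall>(c, a) \<in> E. c + (\<Sum>j\<in>UNIV. a $ j * x $ j) = 0}"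
  have ZL: "Z = torus \<inter> L" unfolding Zdef L_def by auto
  have Lcvx: "convex L"
  proof -
    have "L = (\<Inter>p\<in>E. {x::complex^'n. fst p + (\<Sum>j\<in>UNIV. snd p $ j * x $ j) = 0})"
      unfolding L_def by (auto simp: case_prod_beta)
    then show ?thesis by (auto intro!: convex_INT affine_eq_convex)
  qed
  define Th where "Th = ang ` Z"
  define G where "G = (\<lambda>p::((complex^'n) \<times> real).
     {x \<in> L. \<forall>j. (1 - snd p) * cmod (x $ j) < Re (x $ j * cnj (fst p $ j))})"
  define D where "D = Th \<times> {0<..(1::real)}"
  have GZ: "G p \<subseteq> Z" for p
  proof
    fix x assume "x \<in> G p"
    then have xL: "x \<in> L" and xj: "\<forall>j. (1 - snd p) * cmod (x $ j) < Re (x $ j * cnj (fst p $ j))"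
      unfolding G_def by auto
    have "x $ j \<noteq> 0" for j
    proof
      assume "x $ j = 0"
      then show False using xj[rule_format, of j] by simp
    qed
    then have "x \<in> L" and "\<forall>j. x $ j \<noteq> 0" using xL by auto
    then show "x \<in> Z" unfolding ZL torus_def by auto
  qed
  have angZ: "Re (x $ j * cnj (ang x $ j)) = cmod (x $ j)" if "x \<in> Z" for x j
  proof -
    have "x $ j \<noteq> 0" using that unfolding ZL torus_def by auto
    then show ?thesis
    proof -
      have "x $ j * cnj (x $ j / complex_of_real (cmod (x $ j))) = complex_of_real (cmod (x $ j) ^ 2) / complex_of_real (cmod (x $ j))"
        using complex_norm_square[of "x $ j"] by (simp add: field_simps)
      also have "\<dots> = complex_of_real (cmod (x $ j))" using \<open>x $ j \<noteq> 0\<close> by (simp add: power2_eq_square)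
      finally show ?thesis unfolding ang_def by simp
    qed
  qed
  have xG: "x \<in> G (ang x, t)" if "x \<in> Z" "0 < t" for x t
  proof -
    have "(1 - t) * cmod (x $ j) < cmod (x $ j)" for j
    proof -
      have "x $ j \<noteq> 0" using that unfolding ZL torus_def by auto
      then show ?thesis using that(2) by (simp add: algebra_simps)
    qed
    then show ?thesis using that angZ unfolding G_def ZL by auto
  qed
  have Gcvx: "convex (G p)" if "p \<in> D" for p
  proof -
    have t1: "snd p \<le> 1" using that unfolding D_def by auto
    have "G p = L \<inter> (\<Inter>j. {x::complex^'n. x $ j \<in> {z. (1 - snd p) * cmod z < Re (z * cnj (fst p $ j))}})"
      unfolding G_def by auto
    moreover have "convex {x::complex^'n. x $ j \<in> {z. (1 - snd p) * cmod z < Re (z * cnj (fst p $ j))}}" for j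
      by (rule vec_comp_convex[OF sector_convex[OF t1]])
    ultimately show ?thesis
      by (metis (no_types, lifting) convex_INT convex_Int Lcvx)
  qed
  have loc: "\<exists>y N. open N \<and> p \<in> N \<and> (\<forall>p'\<in>D \<inter> N. y \<in> G p')" if pD: "p \<in> D" for p
  proof -
    obtain y t where p: "p = (ang y, t)" and y: "y \<in> Z" and t: "0 < t" "t \<le> 1"
    proof -
      from pD obtain th t where "p = (th, t)" "th \<in> Th" "0 < t" "t \<le> 1" unfolding D_def by auto
      then show ?thesis using that unfolding Th_def by auto
    qed
    define N where "N = (\<Inter>j. {q::(complex^'n) \<times> real. (1 - snd q) * cmod (y $ j) < Re (y $ j * cnj (fst q $ j))})"
    have "open N" unfolding N_def
      by (intro open_INT ballI open_Collect_less continuous_intros) auto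
    moreover have "p \<in> N" using xG[OF y t(1)] unfolding N_def G_def p by auto
    moreover have "\<forall>p'\<in>D \<inter> N. y \<in> G p'"
      using y unfolding N_def G_def ZL by auto
    ultimately show ?thesis by blast
  qed
  obtain g where gc: "continuous_on D g" and gG: "\<And>p. p \<in> D \<Longrightarrow> g p \<in> G p"
    by (rule convex_selection[OF Gcvx loc]) auto
  have angc: "continuous_on Z ang"
  proof -
    have "continuous_on Z (\<lambda>x. x $ j / complex_of_real (cmod (x $ j)))" for j
      by (intro continuous_intros) (auto simp: ZL torus_def)
    then show ?thesis unfolding ang_def by (intro continuous_on_vec_lambda)
  qed
  have unit: "cmod (th $ j) = 1" if thT: "th \<in> Th" for th j
  proof -
    obtain x where "x \<in> Z" "th = ang x" using thT Th_def by auto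
    then have "x $ j \<noteq> 0" unfolding ZL torus_def by auto
    then show ?thesis using \<open>th = ang x\<close> unfolding ang_def by (simp add: norm_divide)
  qed
  define g1 where "g1 = (\<lambda>th. g (th, 1))"
  have g1c: "continuous_on Th g1"
    unfolding g1_def
    by (rule continuous_on_compose2[OF gc]) (auto intro!: continuous_intros simp: D_def)
  have g1Z: "g1 th \<in> Z" if "th \<in> Th" for th
    using gG[of "(th,1)"] GZ that unfolding g1_def D_def by auto
  have angTh: "ang x \<in> Th" if "x \<in> Z" for x using that Th_def by auto
  show ?thesis
    unfolding homotopy_equivalence_map_def Th_def[symmetric]
  proof (intro conjI exI)
    show "continuous_map (top_of_set Z) (top_of_set Th) ang"
      using angc angTh by auto
    show "continuous_map (top_of_set Th) (top_of_set Z) g1"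
      using g1c g1Z by auto
    show "homotopic_with (\<lambda>h. True) (top_of_set Z) (top_of_set Z) (g1 \<circ> ang) id"
    proof (rule homotopic_with_linear)
      show "continuous_on Z (g1 \<circ> ang)"
        by (rule continuous_on_compose[OF angc continuous_on_subset[OF g1c]]) (auto simp: angTh)
      show "continuous_on Z id" by (simp add: continuous_on_id)
      show "closed_segment ((g1 \<circ> ang) x) (id x) \<subseteq> Z" if "x \<in> Z" for x
      proof -
        have pD: "(ang x, 1) \<in> D" using angTh[OF that] unfolding D_def by auto
        have "g1 (ang x) \<in> G (ang x, 1)" using gG[OF pD] unfolding g1_def .
        moreover have "x \<in> G (ang x, 1)" using xG[OF that] by simp
        ultimately have "closed_segment (g1 (ang x)) x \<subseteq> G (ang x, 1)"
          using Gcvx[OF pD] by (simp add: closed_segment_subset)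
        then show ?thesis using GZ by auto
      qed
    qed
    show "homotopic_with (\<lambda>h. True) (top_of_set Th) (top_of_set Th) (ang \<circ> g1) id"
    proof -
      define h where "h = (\<lambda>q::real \<times> (complex^'n). if fst q = 0 then snd q else ang (g (snd q, fst q)))"
      have hTh: "h q \<in> Th" if "q \<in> {0..1} \<times> Th" for q
      proof (cases "fst q = 0")
        case True then show ?thesis using that by (auto simp: h_def)
      next
        case False
        then have "(snd q, fst q) \<in> D" using that unfolding D_def by (auto simp: less_eq_real_def)
        then have "g (snd q, fst q) \<in> Z" using gG GZ by blast
        then show ?thesis using False angTh by (auto simp: h_def)
      qed
      define f where "f = (\<lambda>q::real \<times> (complex^'n). ang (g (snd q, fst q)))"
      have fc: "continuous_on ({0<..1} \<times> Th) f"
      proof -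
        have "continuous_on ({0<..1} \<times> Th) (\<lambda>q. g (snd q, fst q))"
          by (rule continuous_on_compose2[OF gc]) (auto intro!: continuous_intros simp: D_def)
        moreover have "(\<lambda>q. g (snd q, fst q)) ` ({0<..1} \<times> Th) \<subseteq> Z"
          using gG GZ unfolding D_def by force
        ultimately show ?thesis unfolding f_def
          by (rule continuous_on_compose2[OF angc])
      qed
      have hc: "continuous_on ({0..1} \<times> Th) h"
        unfolding continuous_on_iff
      proof (intro ballI allI impI)
        fix q :: "real \<times> (complex^'n)" and e :: real
        assume q: "q \<in> {0..1} \<times> Th" and e: "0 < e"
        obtain s th0 where qs: "q = (s, th0)" and s: "0 \<le> s" "s \<le> 1" and th0: "th0 \<in> Th"
          using q by auto
        show "\<exists>d>0. \<forall>q'\<in>{0..1} \<times> Th. dist q' q < d \<longrightarrow> dist (h q') (h q) < e"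
        proof (cases "s = 0")
          case False
          then have s0: "0 < s" using s by simp
          have "q \<in> {0<..1} \<times> Th" using qs s0 s th0 by auto
          then obtain d1 where d1: "d1 > 0"
            and d1': "\<forall>q'\<in>{0<..1} \<times> Th. dist q' q < d1 \<longrightarrow> dist (f q') (f q) < e"
            using fc e unfolding continuous_on_iff by blast
          show ?thesis
          proof (intro exI conjI ballI impI)
            show "0 < min d1 s" using d1 s0 by simp
            fix q' assume q': "q' \<in> {0..1} \<times> Th" and dq: "dist q' q < min d1 s"
            have "dist (fst q') (fst q) < s"
              using dist_fst_le[of q' q] dq by linarith
            then have "fst q' > 0" using qs by (auto simp: dist_real_def)
            then have q'A: "q' \<in> {0<..1} \<times> Th" using q' by auto
            have "h q' = f q'" "h q = f q" using \<open>fst q' > 0\<close> s0 qs by (auto simp: h_def f_def)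
            then show "dist (h q') (h q) < e" using d1' q'A dq by auto
          qed
        next
          case True
          define C where "C = real CARD('n)"
          have C: "C > 0" unfolding C_def by simp
          define d where "d = min (e/2) ((e/(2*C))^2/2)"
          have d: "d > 0" unfolding d_def using e C by simp
          show ?thesis
          proof (intro exI conjI ballI impI)
            show "0 < d" by (rule d)
            fix q' assume q': "q' \<in> {0..1} \<times> Th" and dq: "dist q' q < d"
            obtain s' th' where q's: "q' = (s', th')" and s': "0 \<le> s'" "s' \<le> 1" and th': "th' \<in> Th"
              using q' by auto
            have ds: "s' < d" using dist_fst_le[of q' q] dq q's qs True s' by (simp add: dist_real_def)
            have dth: "dist th' th0 < d" using dist_snd_le[of q' q] dq q's qs by simp
            have hq: "h q = th0" using qs True by (simp add: h_def)
            show "dist (h q') (h q) < e"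
            proof (cases "s' = 0")
              case True
              have "d \<le> e/2" unfolding d_def by simp
              then have "dist th' th0 < e" using dth e by linarith
              then show ?thesis using hq True q's by (simp add: h_def)
            next
              case False
              then have s'0: "0 < s'" using s' by simp
              define x where "x = g (th', s')"
              have "(th', s') \<in> D" using th' s'0 s' unfolding D_def by auto
              then have xG': "x \<in> G (th', s')" using gG x_def by blast
              have hq': "h q' = ang x" using q's False by (simp add: h_def x_def)
              have compj: "cmod ((ang x - th') $ j) < e/(2*C)" for j
              proof -
                have "(1 - s') * cmod (x $ j) < Re (x $ j * cnj (th' $ j))"
                  using xG' unfolding G_def by auto
                then have "cmod (x $ j / complex_of_real (cmod (x $ j)) - th' $ j)^2 < 2 * s'"
                  by (rule est[OF unit[OF th']]) (use s'0 in simp)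
                also have "\<dots> < (e/(2*C))^2" using ds unfolding d_def by simp
                finally have "cmod (x $ j / complex_of_real (cmod (x $ j)) - th' $ j) < e/(2*C)"
                  by (rule power2_less_imp_less) (use e C in simp)
                then show ?thesis unfolding ang_def by simp
              qed
              have "dist (ang x) th' \<le> (\<Sum>j\<in>UNIV. cmod ((ang x - th') $ j))"
                unfolding dist_norm by (rule norm_le_sum_vec)
              also have "\<dots> < (\<Sum>j\<in>(UNIV::'n set). e/(2*C))"
                by (rule sum_strict_mono) (use compj in auto)
              also have "\<dots> = e/2" using C by (simp add: C_def)
              finally have "dist (ang x) th' < e/2" .
              moreover have "dist th' th0 < e/2" using dth unfolding d_def by simp
              ultimately show ?thesis using hq hq' dist_triangle[of "ang x" th0 th'] by simp
            qed
          qed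
        qed
      qed
      have "homotopic_with (\<lambda>h. True) (top_of_set Th) (top_of_set Th) id (ang \<circ> g1)"
        unfolding homotopic_with_def
        apply (rule exI[of _ h])
        using hc hTh by (auto simp: h_def g1_def)
      then show ?thesis by (simp add: homotopic_with_sym)
    qed
  qed
qed

end
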